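(* Let $\{|a_i\rangle\}$ and $\{|b_j\rangle\}$ be orthonormal bases of finite-dimensional systems $A$ and $B$, $n=\min\{\dim A,\dim B\}$, and let $\tau_{AB}=\sum_{i,j=1}^n\tau_{ij}|a_i\rangle\langle a_j|\otimes|b_i\rangle\langle b_j|$ be a state (a maximally correlated state). Let $\sigma_{AB}=\sum_{i=1}^n\tau_{ii}|a_i\rangle\langle a_i|\otimes|b_i\rangle\langle b_i|$. Then, with all $l_1$-norms computed in the basis $\{|a_i\rangle\otimes|b_j\rangle\}$, $$\|\tau_{AB}-\sigma_{AB}\|_{l_1}=\min_{\xi\in\mathcal{PPT}}\|\tau_{AB}-\xi\|_{l_1}=\min_{\xi\in\mathcal{SEP}}\|\tau_{AB}-\xi\|_{l_1}.$$
   Context: For a matrix $X$ and an orthonormal basis $\{|e_k\rangle\}$, $\|X\|_{l_1}=\sum_{k,l}|\langle e_k|X|e_l\rangle|$ (basis-dependent). $\mathcal{SEP}$ is the set of separable states on $A\otimes B$, i.e. convex combinations of product states $\tau_A\otimes\sigma_B$; $\mathcal{PPT}$ is the set of states on $A\otimes B$ whose partial transpose is positive semidefinite. *)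

theory Defs
  imports Complex_Main
begin

text \<open>Coordinates: the orthonormal bases are the standard bases; system A has basis
  indices 0..dA-1, system B has 0..dB-1, and A\<otimes>B has basis indices (i,j).
  Matrices on a system with index set S are functions S => S => complex that vanish
  outside S \<times> S.\<close>

definition hermitian_on :: "'i set \<Rightarrow> ('i \<Rightarrow> 'i \<Rightarrow> complex) \<Rightarrow> bool" where
  "hermitian_on S M \<longleftrightarrow> (\<forall>x\<in>S. \<forall>y\<in>S. M y x = cnj (M x y))"

definition psd_on :: "'i set \<Rightarrow> ('i \<Rightarrow> 'i \<Rightarrow> complex) \<Rightarrow> bool" where
  "psd_on S M \<longleftrightarrow> hermitian_on S M \<and>
     (\<forall>v :: 'i \<Rightarrow> complex. 0 \<le> Re (\<Sum>x\<in>S. \<Sum>y\<in>S. cnj (v x) * M x y * v y))"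

definition supported_on :: "'i set \<Rightarrow> ('i \<Rightarrow> 'i \<Rightarrow> complex) \<Rightarrow> bool" where
  "supported_on S M \<longleftrightarrow> (\<forall>x y. x \<notin> S \<or> y \<notin> S \<longrightarrow> M x y = 0)"

definition state_on :: "'i set \<Rightarrow> ('i \<Rightarrow> 'i \<Rightarrow> complex) \<Rightarrow> bool" where
  "state_on S M \<longleftrightarrow> supported_on S M \<and> psd_on S M \<and> (\<Sum>x\<in>S. M x x) = 1"

definition AB_idx :: "nat \<Rightarrow> nat \<Rightarrow> (nat \<times> nat) set" where
  "AB_idx dA dB = {..<dA} \<times> {..<dB}"

definition kron :: "(nat \<Rightarrow> nat \<Rightarrow> complex) \<Rightarrow> (nat \<Rightarrow> nat \<Rightarrow> complex)
    \<Rightarrow> (nat \<times> nat \<Rightarrow> nat \<times> nat \<Rightarrow> complex)" where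
  "kron X Y = (\<lambda>(i, j) (k, l). X i k * Y j l)"

definition ptrans_B :: "(nat \<times> nat \<Rightarrow> nat \<times> nat \<Rightarrow> complex) \<Rightarrow> (nat \<times> nat \<Rightarrow> nat \<times> nat \<Rightarrow> complex)" where
  "ptrans_B M = (\<lambda>(i, j) (k, l). M (i, l) (k, j))"

definition PPT :: "nat \<Rightarrow> nat \<Rightarrow> (nat \<times> nat \<Rightarrow> nat \<times> nat \<Rightarrow> complex) set" where
  "PPT dA dB = {\<xi>. state_on (AB_idx dA dB) \<xi> \<and> psd_on (AB_idx dA dB) (ptrans_B \<xi>)}"

definition SEP :: "nat \<Rightarrow> nat \<Rightarrow> (nat \<times> nat \<Rightarrow> nat \<times> nat \<Rightarrow> complex) set" where
  "SEP dA dB = {\<xi>. \<exists>(m::nat) (p::nat \<Rightarrow> real) \<rho>A \<rho>B.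
      (\<forall>k<m. 0 \<le> p k \<and> state_on {..<dA} (\<rho>A k) \<and> state_on {..<dB} (\<rho>B k)) \<and>
      (\<Sum>k<m. p k) = 1 \<and>
      \<xi> = (\<lambda>x y. \<Sum>k<m. complex_of_real (p k) * kron (\<rho>A k) (\<rho>B k) x y)}"

definition l1_norm :: "'i set \<Rightarrow> ('i \<Rightarrow> 'i \<Rightarrow> complex) \<Rightarrow> real" where
  "l1_norm S M = (\<Sum>x\<in>S. \<Sum>y\<in>S. cmod (M x y))"

end

theory Submission
  imports Defs
begin


lemma sum_two:
  assumes "finite S" "x \<in> S" "y \<in> S" "x \<noteq> y" "\<And>a. a \<in> S \<Longrightarrow> a \<noteq> x \<Longrightarrow> a \<noteq> y \<Longrightarrow> f a = 0"
  shows "sum f S = f x + f y"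
proof -
  have 1: "sum f S = f x + sum f (S - {x})" using assms by (simp add: sum.remove)
  have 2: "sum f (S - {x}) = f y + sum f (S - {x} - {y})" using assms by (intro sum.remove) auto
  have 3: "sum f (S - {x} - {y}) = 0" using assms by (intro sum.neutral) auto
  show ?thesis unfolding 1 2 3 by simp
qed

lemma mc: fixes m :: complex assumes "m \<noteq> 0" shows "m * (cnj m / complex_of_real (cmod m)) = of_real (cmod m)"
proof -
  have "m * cnj m = of_real (cmod m) ^ 2" using complex_norm_square[of m] by simp
  thus ?thesis using assms by (simp add: power2_eq_square)
qed
lemma cc: fixes m :: complex assumes "m \<noteq> 0" shows "cnj (cnj m / complex_of_real (cmod m)) * (cnj m / complex_of_real (cmod m)) = 1"
proof -
  have "m * cnj m = of_real (cmod m) ^ 2" using complex_norm_square[of m] by simp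
  thus ?thesis using assms by (simp add: power2_eq_square)
qed

lemma psd_herm: "psd_on S M \<Longrightarrow> x \<in> S \<Longrightarrow> y \<in> S \<Longrightarrow> M y x = cnj (M x y)"
  unfolding psd_on_def hermitian_on_def by blast
lemma psd_form: "psd_on S M \<Longrightarrow> 0 \<le> Re (\<Sum>a\<in>S. \<Sum>b\<in>S. cnj (v a) * M a b * v b)"
  unfolding psd_on_def by blast

lemma psd_quad:
  assumes "psd_on S M" "finite S" "x \<in> S" "y \<in> S" "x \<noteq> y"
  shows "0 \<le> s^2 * Re (M x x) - 2 * s * cmod (M x y) + Re (M y y)"
proof -
  define m where "m = M x y"
  define c where "c = (if m = 0 then 1 else cnj m / complex_of_real (cmod m))"
  have h: "M y x = cnj m" using psd_herm[OF assms(1,3,4)] unfolding m_def .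
  define v where "v = (\<lambda>z. if z = x then complex_of_real s else if z = y then - c else 0)"
  have vx: "v x = complex_of_real s" and vy: "v y = - c" and v0: "\<And>z. z \<noteq> x \<Longrightarrow> z \<noteq> y \<Longrightarrow> v z = 0"
    using assms(5) by (auto simp: v_def)
  have q: "0 \<le> Re (\<Sum>a\<in>S. \<Sum>b\<in>S. cnj (v a) * M a b * v b)" by (rule psd_form[OF assms(1)])
  have mc: "m * c = of_real (cmod m)" using mc[of m] by (simp add: c_def)
  have cc: "cnj c * c = 1" using cc[of m] by (simp add: c_def)
  have inner: "(\<Sum>b\<in>S. cnj (v a) * M a b * v b) = cnj (v a) * M a x * v x + cnj (v a) * M a y * v y" for a
    using sum_two[OF assms(2-5), of "\<lambda>b. cnj (v a) * M a b * v b"] v0 by simp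
  have "(\<Sum>a\<in>S. \<Sum>b\<in>S. cnj (v a) * M a b * v b) = 
     (cnj (v x) * M x x * v x + cnj (v x) * M x y * v y) + (cnj (v y) * M y x * v x + cnj (v y) * M y y * v y)"
    unfolding inner using sum_two[OF assms(2-5), of "\<lambda>a. cnj (v a) * M a x * v x + cnj (v a) * M a y * v y"] v0 by simp
  also have "\<dots> = of_real (s^2) * M x x - of_real s * (m * c + cnj (m * c)) + cnj c * c * M y y"
    unfolding vx vy h m_def[symmetric] by (simp add: power2_eq_square algebra_simps)
  finally have eq: "(\<Sum>a\<in>S. \<Sum>b\<in>S. cnj (v a) * M a b * v b) = of_real (s^2) * M x x - of_real s * (m * c + cnj (m * c)) + cnj c * c * M y y" .
  have "Re (of_real (s^2) * M x x - of_real s * (m * c + cnj (m * c)) + cnj c * c * M y y)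
     = s^2 * Re (M x x) - 2 * s * cmod m + Re (M y y)" unfolding mc cc by simp
  thus ?thesis using q unfolding eq m_def by simp
qed



lemma psd_diag:
  assumes "psd_on S M" "finite S" "x \<in> S"
  shows "0 \<le> Re (M x x)" "Im (M x x) = 0"
proof -
  define v where "v = (\<lambda>z. if z = x then (1::complex) else 0)"
  have in1: "(\<Sum>b\<in>S. cnj (v a) * M a b * v b) = cnj (v a) * M a x" for a
  proof -
    have "(\<Sum>b\<in>S. cnj (v a) * M a b * v b) = (\<Sum>b\<in>S. if b = x then cnj (v a) * M a x else 0)"
      by (rule sum.cong) (auto simp: v_def)
    also have "\<dots> = cnj (v a) * M a x" using assms(2,3) by simp
    finally show ?thesis .
  qed
  have "(\<Sum>a\<in>S. cnj (v a) * M a x) = (\<Sum>a\<in>S. if a = x then M x x else 0)"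
    by (rule sum.cong) (auto simp: v_def)
  also have "\<dots> = M x x" using assms(2,3) by simp
  finally have "(\<Sum>a\<in>S. \<Sum>b\<in>S. cnj (v a) * M a b * v b) = M x x" unfolding in1 .
  thus "0 \<le> Re (M x x)" using psd_form[OF assms(1), of v] by simp
  have "M x x = cnj (M x x)" using psd_herm[OF assms(1) assms(3) assms(3)] .
  hence "Im (M x x) = Im (cnj (M x x))" by (rule arg_cong)
  thus "Im (M x x) = 0" by simp
qed

lemma psd_gm:
  assumes "psd_on S M" "finite S" "x \<in> S" "y \<in> S" "x \<noteq> y"
  shows "cmod (M x y) ^ 2 \<le> Re (M x x) * Re (M y y)"
proof -
  define a where "a = Re (M x x)"
  define b where "b = Re (M y y)"
  define r where "r = cmod (M x y)"
  have Q: "0 \<le> s^2 * a - 2 * s * r + b" for s using psd_quad[OF assms, of s] unfolding a_def b_def r_def .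
  have a0: "0 \<le> a" unfolding a_def by (rule psd_diag(1)[OF assms(1,2,3)])
  have r0: "0 \<le> r" unfolding r_def by simp
  show ?thesis
  proof (cases "a = 0")
    case True
    have "r = 0"
    proof (rule ccontr)
      assume "r \<noteq> 0" hence rp: "r > 0" using r0 by simp
      define s where "s = (b+1)/(2*r)"
      have "2 * s * r = b + 1" unfolding s_def using rp by simp
      moreover have "0 \<le> s^2 * a - 2 * s * r + b" by (rule Q)
      ultimately show False using True by simp
    qed
    thus ?thesis using True unfolding r_def a_def by simp
  next
    case False
    hence ap: "a > 0" using a0 by simp
    define s where "s = r / a"
    have "s^2 * a = r * s" unfolding s_def using ap by (simp add: power2_eq_square)
    moreover have "0 \<le> s^2 * a - 2 * s * r + b" by (rule Q)
    ultimately have "r * s \<le> b" by (simp add: algebra_simps)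
    hence "r * s * a \<le> b * a" using ap by (simp add: mult_right_mono)
    moreover have "r * s * a = r^2" unfolding s_def using ap by (simp add: power2_eq_square)
    ultimately show ?thesis unfolding r_def a_def b_def by (simp add: mult.commute)
  qed
qed

lemma psd_am:
  assumes "psd_on S M" "finite S" "x \<in> S" "y \<in> S" "x \<noteq> y"
  shows "cmod (M x y) \<le> (Re (M x x) + Re (M y y)) / 2"
  using psd_quad[OF assms, of 1] by simp


lemma diag_psd:
  assumes "finite S" "\<And>x. x \<in> S \<Longrightarrow> Im (d x) = 0 \<and> 0 \<le> Re (d x)"
  shows "psd_on S (\<lambda>x y. if x = y then d x else 0)"
  unfolding psd_on_def hermitian_on_def
proof (intro conjI ballI allI)
  fix x y assume "x \<in> S" "y \<in> S"
  thus "(if y = x then d y else 0) = cnj (if x = y then d x else 0)"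
    using assms by (auto simp: complex_eq_iff)
next
  fix v :: "'a \<Rightarrow> complex"
  have "(\<Sum>x\<in>S. \<Sum>y\<in>S. cnj (v x) * (if x = y then d x else 0) * v y)
     = (\<Sum>x\<in>S. if x \<in> S then cnj (v x) * d x * v x else 0)"
  proof (rule sum.cong)
    fix x assume "x \<in> S"
    have "(\<Sum>y\<in>S. cnj (v x) * (if x = y then d x else 0) * v y) = (\<Sum>y\<in>S. if x = y then cnj (v x) * d x * v x else 0)"
      by (rule sum.cong) auto
    thus "(\<Sum>y\<in>S. cnj (v x) * (if x = y then d x else 0) * v y) = (if x \<in> S then cnj (v x) * d x * v x else 0)"
      using assms(1) by (simp add: sum.delta sum.delta')
  qed simp
  also have "\<dots> = (\<Sum>x\<in>S. cnj (v x) * d x * v x)" by simp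
  finally have e: "(\<Sum>x\<in>S. \<Sum>y\<in>S. cnj (v x) * (if x = y then d x else 0) * v y) = (\<Sum>x\<in>S. cnj (v x) * d x * v x)" .
  have "0 \<le> Re (cnj (v x) * d x * v x)" if xS: "x \<in> S" for x
  proof -
    define r where "r = Re (d x)"
    have dx: "d x = of_real r" "0 \<le> r" using assms(2)[OF xS] by (simp_all add: complex_eq_iff r_def)
    have vv: "v x * cnj (v x) = of_real (cmod (v x) ^ 2)" using complex_norm_square[of "v x"] by simp
    have "cnj (v x) * d x * v x = d x * (v x * cnj (v x))" by (simp add: algebra_simps)
    also have "\<dots> = of_real (r * cmod (v x) ^ 2)" unfolding vv dx(1) of_real_mult ..
    finally show ?thesis using dx(2) by simp
  qed
  thus "0 \<le> Re (\<Sum>x\<in>S. \<Sum>y\<in>S. cnj (v x) * (if x = y then d x else 0) * v y)"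
    unfolding e Re_sum by (intro sum_nonneg) auto
qed


lemma prod_amgm:
  fixes r1 r2 a1 a2 b1 b2 :: real
  assumes "0 \<le> r1" "0 \<le> r2" "0 \<le> a1" "0 \<le> a2" "0 \<le> b1" "0 \<le> b2"
    "r1^2 \<le> a1 * a2" "r2^2 \<le> b1 * b2"
  shows "r1 * r2 \<le> (a1 * b2 + a2 * b1) / 2"
proof -
  define p where "p = a1 * b2"
  define q where "q = a2 * b1"
  have "(r1 * r2)^2 = r1^2 * r2^2" by (simp add: power_mult_distrib)
  also have "\<dots> \<le> (a1 * a2) * (b1 * b2)" using assms by (intro mult_mono) auto
  also have "\<dots> = p * q" unfolding p_def q_def by (simp add: ac_simps)
  also have "\<dots> \<le> ((p + q) / 2)^2"
  proof -
    have "((p + q) / 2)^2 - p * q = ((p - q)/2)^2" by (simp add: power2_eq_square field_simps)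
    moreover have "0 \<le> ((p - q)/2)^2" by simp
    ultimately show ?thesis by linarith
  qed
  finally have "(r1 * r2)^2 \<le> ((p + q) / 2)^2" .
  moreover have "0 \<le> (p + q) / 2" unfolding p_def q_def using assms by simp
  ultimately have "r1 * r2 \<le> (p + q) / 2" by (rule power2_le_imp_le)
  thus ?thesis unfolding p_def q_def .
qed


lemma main_ineq:
  fixes \<xi> \<tau> \<sigma> :: "nat \<times> nat \<Rightarrow> nat \<times> nat \<Rightarrow> complex" and t :: "nat \<Rightarrow> nat \<Rightarrow> complex"
  assumes nA: "n \<le> dA" and nB: "n \<le> dB"
  and tau: "\<tau> = (\<lambda>(i, i') (j, j'). if i = i' \<and> j = j' \<and> i < n \<and> j < n then t i j else 0)"
  and sig: "\<sigma> = (\<lambda>(i, i') (j, j'). if i = i' \<and> j = j' \<and> i = j \<and> i < n then t i i else 0)"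
  and key: "\<And>i j. i<n \<Longrightarrow> j<n \<Longrightarrow> i\<noteq>j \<Longrightarrow> cmod (\<xi> (i,i) (j,j)) \<le> (cmod (\<xi> (i,j) (i,j)) + cmod (\<xi> (j,i) (j,i)))/2"
  shows "l1_norm (AB_idx dA dB) (\<lambda>x y. \<tau> x y - \<sigma> x y) \<le> l1_norm (AB_idx dA dB) (\<lambda>x y. \<tau> x y - \<xi> x y)"
proof -
  define S where "S = AB_idx dA dB"
  have finS: "finite S" unfolding S_def AB_idx_def by simp
  define D where "D = {p :: nat \<times> nat. fst p < n \<and> snd p < n \<and> fst p \<noteq> snd p}"
  have finD: "finite D" unfolding D_def by (rule finite_subset[of _ "{..<n} \<times> {..<n}"]) auto
  define f1 where "f1 = (\<lambda>(i::nat, j::nat). ((i,i),(j,j)))"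
  define f2 where "f2 = (\<lambda>(i::nat, j::nat). ((i,j),(i,j)))"
  have inj1: "inj_on f1 D" unfolding f1_def inj_on_def by auto
  have inj2: "inj_on f2 D" unfolding f2_def inj_on_def by auto
  have P1S: "f1 ` D \<subseteq> S \<times> S" using nA nB unfolding f1_def D_def S_def AB_idx_def by auto
  have P2S: "f2 ` D \<subseteq> S \<times> S" using nA nB unfolding f2_def D_def S_def AB_idx_def by auto
  have disj: "f1 ` D \<inter> f2 ` D = {}" unfolding f1_def f2_def D_def by auto
  have l1: "l1_norm S F = (\<Sum>p\<in>S \<times> S. cmod (F (fst p) (snd p)))" for F :: "nat \<times> nat \<Rightarrow> nat \<times> nat \<Rightarrow> complex"
    unfolding l1_norm_def by (simp add: sum.cartesian_product case_prod_beta)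
  have "l1_norm S (\<lambda>x y. \<tau> x y - \<sigma> x y) = (\<Sum>p\<in>f1 ` D. cmod (\<tau> (fst p) (snd p) - \<sigma> (fst p) (snd p)))"
    unfolding l1
  proof (rule sum.mono_neutral_right[OF _ P1S])
    show "finite (S \<times> S)" using finS by simp
    show "\<forall>p\<in>S \<times> S - f1 ` D. cmod (\<tau> (fst p) (snd p) - \<sigma> (fst p) (snd p)) = 0"
    proof
      fix p assume p: "p \<in> S \<times> S - f1 ` D"
      obtain i i' j j' where pe: "p = ((i,i'),(j,j'))" by (metis prod.collapse)
      have "\<not> (i = i' \<and> j = j' \<and> i < n \<and> j < n \<and> i \<noteq> j)"
      proof
        assume "i = i' \<and> j = j' \<and> i < n \<and> j < n \<and> i \<noteq> j"
        hence "p \<in> f1 ` D" unfolding pe f1_def D_def by (auto intro!: image_eqI[of _ _ "(i,j)"])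
        thus False using p by blast
      qed
      thus "cmod (\<tau> (fst p) (snd p) - \<sigma> (fst p) (snd p)) = 0" unfolding pe tau sig by auto
    qed
  qed
  also have "\<dots> = (\<Sum>p\<in>D. cmod (t (fst p) (snd p)))"
    by (subst sum.reindex[OF inj1]) (auto simp: f1_def D_def tau sig intro!: sum.cong)
  finally have L: "l1_norm S (\<lambda>x y. \<tau> x y - \<sigma> x y) = (\<Sum>p\<in>D. cmod (t (fst p) (snd p)))" .
  define h where "h = (\<lambda>p. cmod (\<tau> (fst p) (snd p) - \<xi> (fst p) (snd p)))"
  have "(\<Sum>p\<in>f1 ` D \<union> f2 ` D. h p) \<le> (\<Sum>p\<in>S \<times> S. h p)"
    by (rule sum_mono2) (use finS P1S P2S in \<open>auto simp: h_def\<close>)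
  also have "\<dots> = l1_norm S (\<lambda>x y. \<tau> x y - \<xi> x y)" unfolding l1 h_def ..
  finally have R0: "(\<Sum>p\<in>f1 ` D. h p) + (\<Sum>p\<in>f2 ` D. h p) \<le> l1_norm S (\<lambda>x y. \<tau> x y - \<xi> x y)"
    using sum.union_disjoint[of "f1 ` D" "f2 ` D" h] finD disj by simp
  have R1: "(\<Sum>p\<in>f1 ` D. h p) = (\<Sum>p\<in>D. cmod (t (fst p) (snd p) - \<xi> (fst p, fst p) (snd p, snd p)))"
    by (subst sum.reindex[OF inj1]) (auto simp: f1_def D_def tau h_def intro!: sum.cong)
  have R2: "(\<Sum>p\<in>f2 ` D. h p) = (\<Sum>p\<in>D. cmod (\<xi> p p))"
    by (subst sum.reindex[OF inj2]) (auto simp: f2_def D_def tau h_def intro!: sum.cong)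
  have swapD: "(\<Sum>p\<in>D. cmod (\<xi> (prod.swap p) (prod.swap p))) = (\<Sum>p\<in>D. cmod (\<xi> p p))"
  proof -
    have "inj_on prod.swap D" unfolding inj_on_def by (metis swap_swap)
    moreover have "prod.swap ` D = D" unfolding D_def by (auto simp: image_iff)
    ultimately show ?thesis using sum.reindex[of prod.swap D "\<lambda>p. cmod (\<xi> p p)"] by simp
  qed
  have "(\<Sum>p\<in>D. cmod (t (fst p) (snd p))) \<le> (\<Sum>p\<in>D. cmod (t (fst p) (snd p) - \<xi> (fst p, fst p) (snd p, snd p))
      + (cmod (\<xi> p p) + cmod (\<xi> (prod.swap p) (prod.swap p)))/2)"
  proof (rule sum_mono)
    fix p assume "p \<in> D"
    then obtain i j where pe: "p = (i,j)" "i < n" "j < n" "i \<noteq> j" unfolding D_def by (cases p) auto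
    have "cmod (t i j) \<le> cmod (t i j - \<xi> (i,i) (j,j)) + cmod (\<xi> (i,i) (j,j))"
      using norm_triangle_ineq[of "t i j - \<xi> (i,i) (j,j)" "\<xi> (i,i) (j,j)"] by simp
    thus "cmod (t (fst p) (snd p)) \<le> cmod (t (fst p) (snd p) - \<xi> (fst p, fst p) (snd p, snd p))
      + (cmod (\<xi> p p) + cmod (\<xi> (prod.swap p) (prod.swap p)))/2"
      using key[OF pe(2-4)] unfolding pe by (simp, linarith)
  qed
  also have "\<dots> = (\<Sum>p\<in>D. cmod (t (fst p) (snd p) - \<xi> (fst p, fst p) (snd p, snd p))) + (\<Sum>p\<in>D. cmod (\<xi> p p))"
    using swapD by (simp add: sum.distrib add_divide_distrib sum_divide_distrib[symmetric])
  finally show ?thesis using L R0 R1 R2 unfolding S_def by linarith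
qed


lemma ppt_key:
  assumes "\<xi> \<in> PPT dA dB" "n \<le> dA" "n \<le> dB" "i < n" "j < n" "i \<noteq> j"
  shows "cmod (\<xi> (i,i) (j,j)) \<le> (cmod (\<xi> (i,j) (i,j)) + cmod (\<xi> (j,i) (j,i)))/2"
proof -
  have ps: "psd_on (AB_idx dA dB) (ptrans_B \<xi>)" using assms(1) unfolding PPT_def by simp
  have fin: "finite (AB_idx dA dB)" unfolding AB_idx_def by simp
  have "cmod (ptrans_B \<xi> (i,j) (j,i)) \<le> (Re (ptrans_B \<xi> (i,j) (i,j)) + Re (ptrans_B \<xi> (j,i) (j,i))) / 2"
    by (rule psd_am[OF ps fin]) (use assms in \<open>auto simp: AB_idx_def\<close>)
  hence "cmod (\<xi> (i,i) (j,j)) \<le> (Re (\<xi> (i,j) (i,j)) + Re (\<xi> (j,i) (j,i))) / 2"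
    by (simp add: ptrans_B_def)
  moreover have "Re (\<xi> (i,j) (i,j)) \<le> cmod (\<xi> (i,j) (i,j))" by (rule complex_Re_le_cmod)
  moreover have "Re (\<xi> (j,i) (j,i)) \<le> cmod (\<xi> (j,i) (j,i))" by (rule complex_Re_le_cmod)
  ultimately show ?thesis
    by (rule order.trans[OF _ divide_right_mono[OF add_mono]]) simp_all
qed

lemma state_psd: "state_on S M \<Longrightarrow> psd_on S M" unfolding state_on_def by simp

lemma sep_key:
  assumes "\<xi> \<in> SEP dA dB" "n \<le> dA" "n \<le> dB" "i < n" "j < n" "i \<noteq> j"
  shows "cmod (\<xi> (i,i) (j,j)) \<le> (cmod (\<xi> (i,j) (i,j)) + cmod (\<xi> (j,i) (j,i)))/2"
proof -
  obtain m :: nat and p A B where H: "(\<forall>k<m. 0 \<le> p k \<and> state_on {..<dA} (A k) \<and> state_on {..<dB} (B k)) \<and>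
      (\<Sum>k<m. p k) = 1 \<and> \<xi> = (\<lambda>x y. \<Sum>k<m. complex_of_real (p k) * kron (A k) (B k) x y)"
    using assms(1) unfolding SEP_def mem_Collect_eq by blast
  have st: "\<forall>k<m. 0 \<le> p k \<and> state_on {..<dA} (A k) \<and> state_on {..<dB} (B k)"
    and xi: "\<xi> = (\<lambda>x y. \<Sum>k<m. complex_of_real (p k) * kron (A k) (B k) x y)" using H by simp_all
  have iA: "i \<in> {..<dA}" "j \<in> {..<dA}" and iB: "i \<in> {..<dB}" "j \<in> {..<dB}" using assms by auto
  have pA: "psd_on {..<dA} (A k)" and pB: "psd_on {..<dB} (B k)" and p0: "0 \<le> p k" if "k < m" for k
    using st that state_psd by blast+
  have e1: "\<xi> (i,i) (j,j) = (\<Sum>k<m. complex_of_real (p k) * (A k i j * B k i j))"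
    unfolding xi kron_def by simp
  have e2: "\<xi> (a,b) (a,b) = (\<Sum>k<m. complex_of_real (p k) * (A k a a * B k b b))" for a b
    unfolding xi kron_def by simp
  have "cmod (\<xi> (i,i) (j,j)) \<le> (\<Sum>k<m. cmod (complex_of_real (p k) * (A k i j * B k i j)))"
    unfolding e1 by (rule norm_sum)
  also have "\<dots> \<le> (\<Sum>k<m. p k * ((Re (A k i i) * Re (B k j j) + Re (A k j j) * Re (B k i i)) / 2))"
  proof (rule sum_mono)
    fix k assume "k \<in> {..<m}" hence k: "k < m" by simp
    have "cmod (A k i j) * cmod (B k i j) \<le> (Re (A k i i) * Re (B k j j) + Re (A k j j) * Re (B k i i)) / 2"
    proof (rule prod_amgm)
      show "0 \<le> Re (A k i i)" "0 \<le> Re (A k j j)" using psd_diag(1)[OF pA[OF k]] iA by auto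
      show "0 \<le> Re (B k i i)" "0 \<le> Re (B k j j)" using psd_diag(1)[OF pB[OF k]] iB by auto
      show "(cmod (A k i j))\<^sup>2 \<le> Re (A k i i) * Re (A k j j)" using psd_gm[OF pA[OF k]] iA assms(6) by auto
      show "(cmod (B k i j))\<^sup>2 \<le> Re (B k i i) * Re (B k j j)" using psd_gm[OF pB[OF k]] iB assms(6) by auto
    qed auto
    hence "p k * (cmod (A k i j) * cmod (B k i j)) \<le> p k * ((Re (A k i i) * Re (B k j j) + Re (A k j j) * Re (B k i i)) / 2)"
      using p0[OF k] by (intro mult_left_mono)
    thus "cmod (complex_of_real (p k) * (A k i j * B k i j)) \<le> p k * ((Re (A k i i) * Re (B k j j) + Re (A k j j) * Re (B k i i)) / 2)"
      using p0[OF k] by (simp add: norm_mult)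
  qed
  also have "\<dots> = (Re (\<xi> (i,j) (i,j)) + Re (\<xi> (j,i) (j,i))) / 2"
  proof -
    have r: "Re (\<xi> (a,b) (a,b)) = (\<Sum>k<m. p k * (Re (A k a a) * Re (B k b b)))"
      if "a \<in> {..<dA}" "b \<in> {..<dB}" for a b
    proof -
      have "Re (\<xi> (a,b) (a,b)) = (\<Sum>k<m. Re (complex_of_real (p k) * (A k a a * B k b b)))"
        unfolding e2 Re_sum ..
      also have "\<dots> = (\<Sum>k<m. p k * (Re (A k a a) * Re (B k b b)))"
      proof (rule sum.cong)
        fix k assume "k \<in> {..<m}" hence k: "k < m" by simp
        have "Im (A k a a) = 0" using psd_diag(2)[OF pA[OF k]] that by auto
        thus "Re (complex_of_real (p k) * (A k a a * B k b b)) = p k * (Re (A k a a) * Re (B k b b))"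
          by simp
      qed simp
      finally show ?thesis .
    qed
    show ?thesis unfolding r[OF iA(1) iB(2)] r[OF iA(2) iB(1)]
      by (simp add: sum_divide_distrib[symmetric] sum.distrib[symmetric] algebra_simps)
  qed
  also have "\<dots> \<le> (cmod (\<xi> (i,j) (i,j)) + cmod (\<xi> (j,i) (j,i)))/2"
    using complex_Re_le_cmod[of "\<xi> (i,j) (i,j)"] complex_Re_le_cmod[of "\<xi> (j,i) (j,i)"] by simp
  finally show ?thesis .
qed

theorem theorem6:
  fixes dA dB n :: nat and t :: "nat \<Rightarrow> nat \<Rightarrow> complex"
    and \<tau> \<sigma> :: "nat \<times> nat \<Rightarrow> nat \<times> nat \<Rightarrow> complex"
  defines "n \<equiv> min dA dB"
  defines "\<tau> \<equiv> (\<lambda>(i, i') (j, j'). if i = i' \<and> j = j' \<and> i < n \<and> j < n then t i j else 0)"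
  defines "\<sigma> \<equiv> (\<lambda>(i, i') (j, j'). if i = i' \<and> j = j' \<and> i = j \<and> i < n then t i i else 0)"
  assumes "state_on (AB_idx dA dB) \<tau>"
  shows "\<sigma> \<in> PPT dA dB \<and>
         (\<forall>\<xi>\<in>PPT dA dB. l1_norm (AB_idx dA dB) (\<lambda>x y. \<tau> x y - \<sigma> x y)
                          \<le> l1_norm (AB_idx dA dB) (\<lambda>x y. \<tau> x y - \<xi> x y)) \<and>
         \<sigma> \<in> SEP dA dB \<and>
         (\<forall>\<xi>\<in>SEP dA dB. l1_norm (AB_idx dA dB) (\<lambda>x y. \<tau> x y - \<sigma> x y)
                          \<le> l1_norm (AB_idx dA dB) (\<lambda>x y. \<tau> x y - \<xi> x y))"
  proof -
  define S where "S = AB_idx dA dB"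
  have finS: "finite S" unfolding S_def AB_idx_def by simp
  have nA: "n \<le> dA" and nB: "n \<le> dB" unfolding n_def by simp_all
  have st: "state_on S \<tau>" using assms(4) unfolding S_def .
  have psdt: "psd_on S \<tau>" and supt: "supported_on S \<tau>" and trt: "(\<Sum>x\<in>S. \<tau> x x) = 1"
    using st unfolding state_on_def by simp_all
  have iiS: "(i,i) \<in> S" if "i < n" for i using that nA nB unfolding S_def AB_idx_def by simp
  have tii: "\<tau> (i,i) (i,i) = t i i" if "i < n" for i using that unfolding \<tau>_def by simp
  have tdiag: "Im (t i i) = 0" "0 \<le> Re (t i i)" if "i < n" for i
    using psd_diag[OF psdt finS iiS[OF that]] tii[OF that] by simp_all
  have treal: "complex_of_real (Re (t i i)) = t i i" if "i < n" for i
    using tdiag[OF that] by (simp add: complex_eq_iff)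
  have diagS: "(\<Sum>x\<in>S. \<tau> x x) = (\<Sum>i<n. t i i)"
  proof -
    have sub: "(\<lambda>i. (i,i)) ` {..<n} \<subseteq> S" using iiS by auto
    have "(\<Sum>x\<in>S. \<tau> x x) = (\<Sum>x\<in>(\<lambda>i. (i,i)) ` {..<n}. \<tau> x x)"
    proof (rule sum.mono_neutral_right[OF finS sub], rule ballI)
      fix x assume x: "x \<in> S - (\<lambda>i. (i,i)) ` {..<n}"
      obtain a b where xe: "x = (a,b)" by (cases x)
      show "\<tau> x x = 0" using x unfolding xe \<tau>_def by auto
    qed
    also have "\<dots> = (\<Sum>i<n. \<tau> (i,i) (i,i))" by (subst sum.reindex) (auto simp: inj_on_def)
    also have "\<dots> = (\<Sum>i<n. t i i)" using tii by simp
    finally show ?thesis .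
  qed
  have trn: "(\<Sum>i<n. t i i) = 1" using trt diagS by simp
  have sigeq: "\<sigma> = (\<lambda>x y. if x = y then \<tau> x x else 0)"
    unfolding \<sigma>_def \<tau>_def by (auto simp: fun_eq_iff)
  have psds: "psd_on S \<sigma>" unfolding sigeq
    by (rule diag_psd[OF finS]) (use psd_diag[OF psdt finS] in auto)
  have sts: "state_on S \<sigma>"
    unfolding state_on_def
  proof (intro conjI)
    show "supported_on S \<sigma>" using supt unfolding sigeq supported_on_def by auto
    show "psd_on S \<sigma>" by (rule psds)
    show "(\<Sum>x\<in>S. \<sigma> x x) = 1" using trt unfolding sigeq by simp
  qed
  have ptr: "ptrans_B \<sigma> = \<sigma>" unfolding ptrans_B_def \<sigma>_def by (auto simp: fun_eq_iff)
  have PPTs: "\<sigma> \<in> PPT dA dB" using sts psds unfolding PPT_def S_def by (simp add: ptr)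
  define \<rho> :: "nat \<Rightarrow> nat \<Rightarrow> nat \<Rightarrow> complex" where "\<rho> = (\<lambda>k a b. if a = b then (if a = k then 1 else 0) else 0)"
  have strho: "state_on {..<d} (\<rho> k)" if "k < d" for k d
    unfolding state_on_def
  proof (intro conjI)
    show "supported_on {..<d} (\<rho> k)" using that unfolding supported_on_def \<rho>_def by auto
    show "psd_on {..<d} (\<rho> k)" unfolding \<rho>_def by (rule diag_psd) auto
    show "(\<Sum>x\<in>{..<d}. \<rho> k x x) = 1" using that unfolding \<rho>_def by simp
  qed
  have SEPs: "\<sigma> \<in> SEP dA dB"
    unfolding SEP_def mem_Collect_eq
  proof (intro exI conjI allI impI)
    fix k assume k: "k < n"
    show "0 \<le> Re (t k k)" by (rule tdiag(2)[OF k])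
    show "state_on {..<dA} (\<rho> k)" using k nA by (intro strho) simp
    show "state_on {..<dB} (\<rho> k)" using k nB by (intro strho) simp
  next
    show "(\<Sum>k<n. Re (t k k)) = 1" using arg_cong[OF trn, of Re] by (simp add: Re_sum)
  next
    show "\<sigma> = (\<lambda>x y. \<Sum>k<n. complex_of_real (Re (t k k)) * kron (\<rho> k) (\<rho> k) x y)"
    proof (intro ext)
      fix x y :: "nat \<times> nat"
      obtain i i' where xe: "x = (i,i')" by (cases x)
      obtain j j' where ye: "y = (j,j')" by (cases y)
      show "\<sigma> x y = (\<Sum>k<n. complex_of_real (Re (t k k)) * kron (\<rho> k) (\<rho> k) x y)"
      proof (cases "i = i' \<and> j = j' \<and> i = j \<and> i < n")
        case True
        have "(\<Sum>k<n. complex_of_real (Re (t k k)) * kron (\<rho> k) (\<rho> k) x y)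
            = (\<Sum>k<n. if k = i then complex_of_real (Re (t k k)) else 0)"
          by (rule sum.cong) (use True in \<open>auto simp: xe ye kron_def \<rho>_def\<close>)
        also have "\<dots> = t i i" using True treal by simp
        finally show ?thesis using True unfolding xe ye \<sigma>_def by simp
      next
        case False
        have "(\<Sum>k<n. complex_of_real (Re (t k k)) * kron (\<rho> k) (\<rho> k) x y) = 0"
          by (rule sum.neutral) (use False in \<open>auto simp: xe ye kron_def \<rho>_def\<close>)
        thus ?thesis using False unfolding xe ye \<sigma>_def by auto
      qed
    qed
  qed
  show ?thesis
  proof (intro conjI ballI)
    show "\<sigma> \<in> PPT dA dB" by (rule PPTs)
    show "\<sigma> \<in> SEP dA dB" by (rule SEPs)
  next
    fix \<xi> assume "\<xi> \<in> PPT dA dB"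
    thus "l1_norm (AB_idx dA dB) (\<lambda>x y. \<tau> x y - \<sigma> x y) \<le> l1_norm (AB_idx dA dB) (\<lambda>x y. \<tau> x y - \<xi> x y)"
      by (intro main_ineq[OF nA nB \<tau>_def[THEN meta_eq_to_obj_eq] \<sigma>_def[THEN meta_eq_to_obj_eq]] ppt_key[OF _ nA nB])
  next
    fix \<xi> assume "\<xi> \<in> SEP dA dB"
    thus "l1_norm (AB_idx dA dB) (\<lambda>x y. \<tau> x y - \<sigma> x y) \<le> l1_norm (AB_idx dA dB) (\<lambda>x y. \<tau> x y - \<xi> x y)"
      by (intro main_ineq[OF nA nB \<tau>_def[THEN meta_eq_to_obj_eq] \<sigma>_def[THEN meta_eq_to_obj_eq]] sep_key[OF _ nA nB])
  qed
qed

end
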